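(* Let $G=(V,E)$ be a graph, let $r:V\to\mathbb{Z}_+$, and let $S\subseteq V$. Then the following are equivalent: (i) $S$ is a vector connectivity set for $(G,r)$; (ii) for every non-empty set $X\subseteq V$ such that $G[X]$ is connected and $R(X)>|N_G(X)|$, we have $S\cap X\neq\emptyset$.
   Context: All graphs are finite, simple and undirected; $\mathbb{Z}_+=\{0,1,2,\dots\}$. For $X\subseteq V$, $N_G(X)=\left(\bigcup_{v\in X}N_G(v)\right)\setminus X$ and $G[X]$ is the subgraph induced by $X$. For a vertex requirement function $r:V\to\mathbb{Z}_+$ and non-empty $X\subseteq V$, $R(X)=\max_{x\in X} r(x)$. For $S\subseteq V$ and $v\in V\setminus S$, a $v$--$S$ fan of order $k$ is a collection of $k$ paths $P_1,\dots,P_k$, each connecting $v$ to a vertex of $S$, such that $V(P_i)\cap V(P_j)=\{v\}$ for all $i<j$; $v$ is $k$-linked to $S$ if such a fan exists. A vector connectivity set for $(G,r)$ is a set $S\subseteq V$ such that every $v\in V\setminus S$ is $r(v)$-linked to $S$. *)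

theory Defs
  imports Main
begin

definition graph :: "'a set \<Rightarrow> ('a \<Rightarrow> 'a \<Rightarrow> bool) \<Rightarrow> bool" where
  "graph V E \<longleftrightarrow> finite V \<and> (\<forall>x y. E x y \<longrightarrow> E y x) \<and> (\<forall>x. \<not> E x x)
     \<and> (\<forall>x y. E x y \<longrightarrow> x \<in> V \<and> y \<in> V)"

definition is_path :: "'a set \<Rightarrow> ('a \<Rightarrow> 'a \<Rightarrow> bool) \<Rightarrow> 'a list \<Rightarrow> bool" where
  "is_path V E p \<longleftrightarrow> p \<noteq> [] \<and> distinct p \<and> set p \<subseteq> V
     \<and> (\<forall>i. Suc i < length p \<longrightarrow> E (p ! i) (p ! Suc i))"

definition nbhd :: "('a \<Rightarrow> 'a \<Rightarrow> bool) \<Rightarrow> 'a set \<Rightarrow> 'a set" where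
  "nbhd E X = {u. \<exists>x\<in>X. E x u} - X"

definition induced_connected :: "'a set \<Rightarrow> ('a \<Rightarrow> 'a \<Rightarrow> bool) \<Rightarrow> 'a set \<Rightarrow> bool" where
  "induced_connected V E X \<longleftrightarrow> (\<forall>x\<in>X. \<forall>y\<in>X. \<exists>p. is_path V E p \<and> set p \<subseteq> X
       \<and> hd p = x \<and> last p = y)"

definition Rmax :: "('a \<Rightarrow> nat) \<Rightarrow> 'a set \<Rightarrow> nat" where
  "Rmax r X = Max (r ` X)"

definition fan :: "'a set \<Rightarrow> ('a \<Rightarrow> 'a \<Rightarrow> bool) \<Rightarrow> 'a \<Rightarrow> 'a set \<Rightarrow> 'a list list \<Rightarrow> bool" where
  "fan V E v S Ps \<longleftrightarrow>
     (\<forall>P\<in>set Ps. is_path V E P \<and> hd P = v \<and> last P \<in> S)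
     \<and> (\<forall>i j. i < j \<and> j < length Ps \<longrightarrow> set (Ps ! i) \<inter> set (Ps ! j) = {v})"

definition k_linked :: "'a set \<Rightarrow> ('a \<Rightarrow> 'a \<Rightarrow> bool) \<Rightarrow> nat \<Rightarrow> 'a \<Rightarrow> 'a set \<Rightarrow> bool" where
  "k_linked V E k v S \<longleftrightarrow> (\<exists>Ps. fan V E v S Ps \<and> length Ps = k)"

definition vc_set :: "'a set \<Rightarrow> ('a \<Rightarrow> 'a \<Rightarrow> bool) \<Rightarrow> ('a \<Rightarrow> nat) \<Rightarrow> 'a set \<Rightarrow> bool" where
  "vc_set V E r S \<longleftrightarrow> (\<forall>v\<in>V - S. k_linked V E (r v) v S)"

end

theory Submission
  imports Defs
begin

lemma is_path_alt: "is_path V E p \<longleftrightarrow> p \<noteq> [] \<and> distinct p \<and> set p \<subseteq> V \<and> successively E p"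
  by (auto simp: is_path_def successively_conv_nth)

definition sep :: "'a set \<Rightarrow> ('a \<Rightarrow> 'a \<Rightarrow> bool) \<Rightarrow> 'a set \<Rightarrow> 'a set \<Rightarrow> 'a set \<Rightarrow> bool" where
  "sep V E A B T \<longleftrightarrow> (\<forall>p. is_path V E p \<longrightarrow> hd p \<in> A \<longrightarrow> last p \<in> B \<longrightarrow> set p \<inter> T \<noteq> {})"

definition linkage :: "'a set \<Rightarrow> ('a \<Rightarrow> 'a \<Rightarrow> bool) \<Rightarrow> 'a set \<Rightarrow> 'a set \<Rightarrow> 'a list set \<Rightarrow> bool" where
  "linkage V E A B P \<longleftrightarrow> (\<forall>p\<in>P. is_path V E p \<and> hd p \<in> A \<and> last p \<in> B)
     \<and> (\<forall>p\<in>P. \<forall>q\<in>P. p \<noteq> q \<longrightarrow> set p \<inter> set q = {})"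

abbreviation reach :: "('a \<Rightarrow> 'a \<Rightarrow> bool) \<Rightarrow> 'a set \<Rightarrow> 'a \<Rightarrow> 'a \<Rightarrow> bool" where
  "reach E W \<equiv> (\<lambda>x y. E x y \<and> x \<in> W \<and> y \<in> W)\<^sup>*\<^sup>*"

lemma path_rtc: "successively E p \<Longrightarrow> p \<noteq> [] \<Longrightarrow> set p \<subseteq> W \<Longrightarrow> reach E W (hd p) (last p)"
proof (induction p)
  case Nil then show ?case by simp
next
  case (Cons x p)
  show ?case
  proof (cases "p = []")
    case True then show ?thesis by simp
  next
    case False
    then have "E x (hd p)" "successively E p" using Cons.prems by (auto simp: successively_Cons)
    moreover have "hd p \<in> set p" using False by simp
    moreover have "reach E W (hd p) (last p)" using Cons.IH Cons.prems False \<open>successively E p\<close> by simp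
    moreover have "x \<in> W" "hd p \<in> W" using Cons.prems \<open>hd p \<in> set p\<close> by auto
    ultimately have st: "(\<lambda>x y. E x y \<and> x \<in> W \<and> y \<in> W) x (hd p)" and rr: "reach E W (hd p) (last p)" by auto
    have "reach E W x (last p)" by (rule converse_rtranclp_into_rtranclp[OF st rr])
    then show ?thesis using False by simp
  qed
qed

lemma successively_prefix: "successively E (xs @ ys) \<Longrightarrow> successively E xs"
  by (simp add: successively_append_iff)
lemma successively_suffix: "successively E (xs @ ys) \<Longrightarrow> successively E ys"
  by (simp add: successively_append_iff)

lemma path_prefix: "is_path V E (xs @ y # ys) \<Longrightarrow> is_path V E (xs @ [y])"
proof -
  assume a: "is_path V E (xs @ y # ys)"
  have "successively E ((xs @ [y]) @ ys)" using a by (simp add: is_path_alt)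
  then have "successively E (xs @ [y])" by (rule successively_prefix)
  then show ?thesis using a by (auto simp: is_path_alt)
qed

lemma path_suffix: "is_path V E (xs @ y # ys) \<Longrightarrow> is_path V E (y # ys)"
  by (auto simp: is_path_alt successively_append_iff)

lemma rtc_path:
  assumes "reach E W x y" "x \<in> W" "W \<subseteq> V"
  shows "\<exists>p. is_path V E p \<and> hd p = x \<and> last p = y \<and> set p \<subseteq> W"
  using assms(1)
proof (induction rule: rtranclp_induct)
  case base
  then show ?case using assms by (intro exI[of _ "[x]"]) (auto simp: is_path_alt)
next
  case (step y z)
  then obtain p where p: "is_path V E p" "hd p = x" "last p = y" "set p \<subseteq> W" by blast
  show ?case
  proof (cases "z \<in> set p")
    case True
    then obtain xs ys where pz: "p = xs @ z # ys" by (meson split_list)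
    have "is_path V E (xs @ [z])" using p pz path_prefix by metis
    moreover have "hd (xs @ [z]) = x" using p pz by (cases xs) auto
    ultimately show ?thesis using p pz by (intro exI[of _ "xs @ [z]"]) auto
  next
    case False
    have "successively E (p @ [z])" using p step by (auto simp: is_path_alt successively_append_iff)
    then have "is_path V E (p @ [z])" using p step False assms by (auto simp: is_path_alt)
    then show ?thesis using p step by (intro exI[of _ "p @ [z]"]) (auto simp: is_path_alt)
  qed
qed

lemma graph_sym: "graph V E \<Longrightarrow> E x y \<Longrightarrow> E y x" by (auto simp: graph_def)

lemma path_rev: "graph V E \<Longrightarrow> is_path V E (rev p) \<longleftrightarrow> is_path V E p"
proof -
  assume g: "graph V E"
  have "successively (\<lambda>x y. E y x) p \<longleftrightarrow> successively E p"
  proof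
    assume "successively (\<lambda>x y. E y x) p" then show "successively E p"
      by (rule successively_mono) (simp add: graph_sym[OF g])
  next
    assume "successively E p" then show "successively (\<lambda>x y. E y x) p"
      by (rule successively_mono) (simp add: graph_sym[OF g])
  qed
  then show ?thesis by (simp add: is_path_alt)
qed


lemma sep_sym: "graph V E \<Longrightarrow> sep V E A B T \<longleftrightarrow> sep V E B A T"
  unfolding sep_def
proof safe
  fix p assume g: "graph V E" and h: "\<forall>p. is_path V E p \<longrightarrow> hd p \<in> A \<longrightarrow> last p \<in> B \<longrightarrow> set p \<inter> T \<noteq> {}"
    and p: "is_path V E p" "hd p \<in> B" "last p \<in> A" "set p \<inter> T = {}"
  have "p \<noteq> []" using p by (simp add: is_path_alt)
  then show False using h[rule_format, of "rev p"] p path_rev[OF g] by (simp add: hd_rev last_rev)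
next
  fix p assume g: "graph V E" and h: "\<forall>p. is_path V E p \<longrightarrow> hd p \<in> B \<longrightarrow> last p \<in> A \<longrightarrow> set p \<inter> T \<noteq> {}"
    and p: "is_path V E p" "hd p \<in> A" "last p \<in> B" "set p \<inter> T = {}"
  have "p \<noteq> []" using p by (simp add: is_path_alt)
  then show False using h[rule_format, of "rev p"] p path_rev[OF g] by (simp add: hd_rev last_rev)
qed

lemma nocross:
  assumes "sep V E A B T0" "reach E (V - T0) u w" "u \<in> V - T0" "u \<in> A" "w \<in> B"
  shows False
proof -
  obtain p where "is_path V E p" "hd p = u" "last p = w" "set p \<subseteq> V - T0"
    using rtc_path[OF assms(2,3)] by blast
  then show False using assms(1,4,5) unfolding sep_def by blast
qed


lemma trim_path:
  assumes "is_path V E p" "last p \<in> B"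
  shows "\<exists>p'. is_path V E p' \<and> hd p' = hd p \<and> last p' \<in> B \<and> set p' \<subseteq> set p \<and> set (butlast p') \<inter> B = {}"
proof -
  have "p \<noteq> []" using assms by (simp add: is_path_alt)
  then have ex: "\<exists>x\<in>set p. x \<in> B" using assms(2) last_in_set by blast
  obtain ys x zs where p: "p = ys @ x # zs" "x \<in> B" "\<forall>y\<in>set ys. y \<notin> B"
    using split_list_first_prop[OF ex] by blast
  have "is_path V E (ys @ [x])" using path_prefix[of V E ys x zs] assms(1) p(1) by simp
  moreover have "hd (ys @ [x]) = hd p" using p by (cases ys) auto
  moreover have "set (ys @ [x]) \<subseteq> set p" using p by auto
  moreover have "set (butlast (ys @ [x])) \<inter> B = {}" using p by auto
  ultimately show ?thesis using p(2) by (intro exI[of _ "ys @ [x]"]) simp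
qed


lemma trim_linkage:
  assumes "linkage V E A B P" "finite P"
  shows "\<exists>P'. linkage V E A B P' \<and> finite P' \<and> card P' = card P \<and> (\<forall>p\<in>P'. set (butlast p) \<inter> B = {})"
proof -
  have L1: "\<And>p. p \<in> P \<Longrightarrow> is_path V E p \<and> hd p \<in> A \<and> last p \<in> B" using assms(1) unfolding linkage_def by blast
  have L2: "\<And>p q. p \<in> P \<Longrightarrow> q \<in> P \<Longrightarrow> p \<noteq> q \<Longrightarrow> set p \<inter> set q = {}" using assms(1) unfolding linkage_def by blast
  have "\<forall>p\<in>P. \<exists>p'. is_path V E p' \<and> hd p' = hd p \<and> last p' \<in> B \<and> set p' \<subseteq> set p \<and> set (butlast p') \<inter> B = {}"
  proof
    fix p assume "p \<in> P"
    then show "\<exists>p'. is_path V E p' \<and> hd p' = hd p \<and> last p' \<in> B \<and> set p' \<subseteq> set p \<and> set (butlast p') \<inter> B = {}"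
      using L1 trim_path[of V E p B] by simp
  qed
  from bchoice[OF this] obtain t where t0: "\<forall>p\<in>P. is_path V E (t p) \<and> hd (t p) = hd p \<and> last (t p) \<in> B \<and> set (t p) \<subseteq> set p \<and> set (butlast (t p)) \<inter> B = {}"
    by blast
  have t: "\<And>p. p \<in> P \<Longrightarrow> is_path V E (t p) \<and> hd (t p) = hd p \<and> last (t p) \<in> B \<and> set (t p) \<subseteq> set p \<and> set (butlast (t p)) \<inter> B = {}"
    using t0 by blast
  have inj: "inj_on t P"
  proof (rule inj_onI)
    fix p q assume pq: "p \<in> P" "q \<in> P" "t p = t q"
    show "p = q"
    proof (rule ccontr)
      assume "p \<noteq> q"
      then have d: "set p \<inter> set q = {}" using L2 pq by blast
      have "t p \<noteq> []" using t[OF pq(1)] by (simp add: is_path_alt)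
      then have "last (t p) \<in> set (t p)" by simp
      then have "last (t p) \<in> set p" "last (t q) \<in> set q" using t[OF pq(1)] t[OF pq(2)] pq(3) by auto
      then show False using d pq(3) by auto
    qed
  qed
  have "linkage V E A B (t ` P)"
    unfolding linkage_def
  proof (rule conjI)
    show "\<forall>p'\<in>t ` P. is_path V E p' \<and> hd p' \<in> A \<and> last p' \<in> B"
    proof
      fix p' assume "p' \<in> t ` P"
      then obtain p where "p \<in> P" "p' = t p" by blast
      then show "is_path V E p' \<and> hd p' \<in> A \<and> last p' \<in> B" using t[of p] L1[of p] by simp
    qed
    show "\<forall>p'\<in>t ` P. \<forall>q'\<in>t ` P. p' \<noteq> q' \<longrightarrow> set p' \<inter> set q' = {}"
    proof (intro ballI impI)
      fix p' q' assume "p' \<in> t ` P" "q' \<in> t ` P" "p' \<noteq> q'"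
      then obtain p q where pq: "p \<in> P" "p' = t p" "q \<in> P" "q' = t q" by blast
      then have "p \<noteq> q" using \<open>p' \<noteq> q'\<close> by blast
      then have "set p \<inter> set q = {}" using L2 pq by blast
      then show "set p' \<inter> set q' = {}" using t[OF pq(1)] t[OF pq(3)] pq by blast
    qed
  qed
  moreover have "card (t ` P) = card P" using inj by (simp add: card_image)
  moreover have "\<forall>p\<in>t ` P. set (butlast p) \<inter> B = {}" using t by blast
  ultimately show ?thesis using assms(2) by (intro exI[of _ "t ` P"]) simp
qed

lemma linkage_rev:
  assumes g: "graph V E" and L: "linkage V E A B P"
  shows "linkage V E B A (rev ` P)"
  unfolding linkage_def
proof (rule conjI)
  show "\<forall>p'\<in>rev ` P. is_path V E p' \<and> hd p' \<in> B \<and> last p' \<in> A"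
  proof
    fix p' assume "p' \<in> rev ` P"
    then obtain p where p: "p \<in> P" "p' = rev p" by blast
    then have "is_path V E p" "hd p \<in> A" "last p \<in> B" using L unfolding linkage_def by auto
    moreover then have "p \<noteq> []" by (simp add: is_path_alt)
    ultimately show "is_path V E p' \<and> hd p' \<in> B \<and> last p' \<in> A"
      using p path_rev[OF g, of p] by (simp add: hd_rev last_rev)
  qed
  show "\<forall>p'\<in>rev ` P. \<forall>q'\<in>rev ` P. p' \<noteq> q' \<longrightarrow> set p' \<inter> set q' = {}"
  proof (intro ballI impI)
    fix p' q' assume "p' \<in> rev ` P" "q' \<in> rev ` P" "p' \<noteq> q'"
    then obtain p q where pq: "p \<in> P" "p' = rev p" "q \<in> P" "q' = rev q" by blast
    then have "p \<noteq> q" using \<open>p' \<noteq> q'\<close> by blast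
    then have "set p \<inter> set q = {}" using L pq unfolding linkage_def by blast
    then show "set p' \<inter> set q' = {}" using pq by simp
  qed
qed

lemma trim_linkage_left:
  assumes g: "graph V E" and L: "linkage V E A B P" and fin: "finite P"
  shows "\<exists>P'. linkage V E A B P' \<and> finite P' \<and> card P' = card P \<and> (\<forall>p\<in>P'. set (tl p) \<inter> A = {})"
proof -
  have L1: "linkage V E B A (rev ` P)" by (rule linkage_rev[OF g L])
  have c1: "card (rev ` P) = card P" by (simp add: card_image)
  obtain P'' where P'': "linkage V E B A P''" "finite P''" "card P'' = card P"
    "\<forall>p\<in>P''. set (butlast p) \<inter> A = {}"
    using trim_linkage[OF L1] fin c1 by auto
  have "linkage V E A B (rev ` P'')" using linkage_rev[OF g P''(1)] .
  moreover have "\<forall>p\<in>rev ` P''. set (tl p) \<inter> A = {}"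
  proof
    fix p' assume "p' \<in> rev ` P''"
    then obtain p where p: "p \<in> P''" "p' = rev p" by blast
    have "tl (rev p) = rev (butlast p)" by (metis butlast_rev rev_rev_ident)
    then show "set (tl p') \<inter> A = {}" using p P''(4) by simp
  qed
  moreover have "card (rev ` P'') = card P" using P''(3) by (simp add: card_image)
  ultimately show ?thesis using P''(2) by (intro exI[of _ "rev ` P''"]) simp
qed


lemma meets_ab:
  assumes g: "graph V E" and E': "E' = (\<lambda>u w. E u w \<and> \<not>(u=a \<and> w=b) \<and> \<not>(u=b \<and> w=a))"
    and T0: "sep V E' A B T0"
    and P: "is_path V E P" "hd P \<in> A" "last P \<in> B" "set P \<inter> T0 = {}"
  shows "a \<in> set P \<and> b \<in> set P"
proof -
  have "\<not> is_path V E' P" using T0 P unfolding sep_def by blast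
  then have "\<not> successively E' P" using P by (auto simp: is_path_alt)
  then obtain i where i: "Suc i < length P" "\<not> E' (P!i) (P!Suc i)" by (auto simp: successively_conv_nth)
  moreover have "E (P!i) (P!Suc i)" using P(1) i by (auto simp: is_path_def)
  ultimately have "(P!i = a \<and> P!Suc i = b) \<or> (P!i = b \<and> P!Suc i = a)" using E' by auto
  moreover have "P!i \<in> set P" "P!Suc i \<in> set P" using i by auto
  ultimately show ?thesis by auto
qed



lemma claim1:
  assumes g: "graph V E" and E': "E' = (\<lambda>u w. E u w \<and> \<not>(u=a \<and> w=b) \<and> \<not>(u=b \<and> w=a))"
    and T0: "sep V E' A B T0" "T0 \<subseteq> V"
    and p2: "is_path V E' p2" "hd p2 = b" "last p2 \<in> B" "set p2 \<inter> T0 = {}"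
    and T: "sep V E' A (insert a T0) T"
  shows "sep V E A B T"
  unfolding sep_def
proof (intro allI impI)
  fix P assume P: "is_path V E P" "hd P \<in> A" "last P \<in> B"
  show "set P \<inter> T \<noteq> {}"
  proof
    assume PT: "set P \<inter> T = {}"
    have ex: "\<exists>x\<in>set P. x \<in> insert a T0"
    proof (cases "set P \<inter> T0 = {}")
      case True then have "a \<in> set P" using meets_ab[OF g E' T0(1) P] by simp
      then show ?thesis by blast
    next
      case False then show ?thesis by blast
    qed
    then obtain ys x zs where split: "P = ys @ x # zs" "x \<in> insert a T0" "\<forall>y\<in>set ys. y \<notin> insert a T0"
      using split_list_first_prop[OF ex] by blast
    have pp: "is_path V E (ys @ [x])" using path_prefix[of V E ys x zs] P(1) split(1) by simp
    have hdP: "hd (ys @ [x]) = hd P" using split(1) by (cases ys) auto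
    have sE: "successively E ys" using pp by (simp add: is_path_alt successively_append_iff)
    have sE': "successively E' ys"
    proof (rule successively_mono[OF sE])
      fix u w assume "u \<in> set ys" "w \<in> set ys" "E u w"
      then have "u \<noteq> a" "w \<noteq> a" using split(3) by blast+
      then show "E' u w" using \<open>E u w\<close> by (simp add: E')
    qed
    show False
    proof (cases "ys = [] \<or> E' (last ys) x")
      case True
      then have "successively E' (ys @ [x])" using sE' by (auto simp: successively_append_iff)
      then have pE': "is_path V E' (ys @ [x])" using pp by (simp add: is_path_alt)
      have "hd (ys @ [x]) \<in> A" using hdP P(2) by simp
      moreover have "last (ys @ [x]) \<in> insert a T0" using split(2) by simp
      ultimately have "set (ys @ [x]) \<inter> T \<noteq> {}" using T pE' unfolding sep_def by blast
      moreover have "set (ys @ [x]) \<subseteq> set P" using split(1) by auto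
      ultimately show False using PT by blast
    next
      case False
      then have ne: "ys \<noteq> []" and nE': "\<not> E' (last ys) x" by auto
      have "E (last ys) x" using pp ne by (simp add: is_path_alt successively_append_iff)
      then have "(last ys = a \<and> x = b) \<or> (last ys = b \<and> x = a)" using nE' by (simp add: E')
      moreover have "last ys \<in> set ys" using ne by simp
      then have "last ys \<noteq> a" using split(3) by blast
      ultimately have lb: "last ys = b" by blast
      have yp: "is_path V E' ys" using pp sE' ne by (simp add: is_path_alt)
      have yW: "set ys \<subseteq> V - T0" using yp split(3) by (auto simp: is_path_alt)
      have r1: "reach E' (V - T0) (hd ys) b"
        using path_rtc[OF sE' ne yW] lb by simp
      have p2W: "set p2 \<subseteq> V - T0" using p2(1,4) by (auto simp: is_path_alt)
      have "successively E' p2" "p2 \<noteq> []" using p2(1) by (simp_all add: is_path_alt)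
      then have r2: "reach E' (V - T0) b (last p2)"
        using path_rtc[of E' p2 "V - T0"] p2(2) p2W by simp
      have "hd ys \<in> A" using hdP P(2) ne by simp
      moreover have "hd ys \<in> V - T0" using yW ne hd_in_set by blast
      ultimately show False using nocross[OF T0(1) rtranclp_trans[OF r1 r2]] p2(3) by blast
    qed
  qed
qed

lemma cross:
  assumes T0: "sep V E' A B T0"
    and p: "is_path V E' p" "hd p \<in> A" "last p \<in> insert a T0" "set (butlast p) \<inter> insert a T0 = {}"
    and q: "is_path V E' q" "hd q \<in> insert b T0" "last q \<in> B" "set (tl q) \<inter> insert b T0 = {}"
    and ra: "reach E' (V - T0) a0 a" "a0 \<in> A" "a0 \<in> V - T0"
    and rb: "reach E' (V - T0) b b0" "b0 \<in> B"
    and ab: "a \<noteq> b" "a \<notin> T0" "b \<notin> T0"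
    and u: "u \<in> set p" "u \<in> set q"
  shows "u \<in> T0 \<and> u = last p \<and> u = hd q"
proof -
  obtain xs ys where pu: "p = xs @ u # ys" using split_list[OF u(1)] by blast
  obtain zs ws where qu: "q = zs @ u # ws" using split_list[OF u(2)] by blast
  have sp: "successively E' p" "set p \<subseteq> V" using p(1) by (simp_all add: is_path_alt)
  have sq: "successively E' q" "set q \<subseteq> V" using q(1) by (simp_all add: is_path_alt)
  have spre: "successively E' (xs @ [u])"
    using sp(1) pu successively_prefix[of E' "xs @ [u]" ys] by simp
  have ssuf: "successively E' (u # ws)"
    using sq(1) qu successively_suffix[of E' zs "u # ws"] by simp
  have hdp: "hd (xs @ [u]) = hd p" using pu by (cases xs) auto
  have lastq: "last (u # ws) = last q" using qu by simp
  show ?thesis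
  proof (cases "u = last p")
    case False
    then have "ys \<noteq> []" using pu by auto
    then have "butlast p = xs @ u # butlast ys" using pu by (simp add: butlast_append)
    then have "set (xs @ [u]) \<inter> insert a T0 = {}" using p(4) by auto
    moreover have "set (xs @ [u]) \<subseteq> V" using sp(2) pu by auto
    ultimately have W1: "set (xs @ [u]) \<subseteq> V - T0" by blast
    have rA: "reach E' (V - T0) (hd p) u" using path_rtc[OF spre _ W1] hdp by simp
    have hW: "hd p \<in> V - T0" using W1 hdp by (metis hd_in_set snoc_eq_iff_butlast subsetD)
    show ?thesis
    proof (cases "u = hd q")
      case False
      then have "zs \<noteq> []" using qu by auto
      then have "tl q = tl zs @ u # ws" using qu by simp
      then have "set (u # ws) \<inter> insert b T0 = {}" using q(4) by auto
      moreover have "set (u # ws) \<subseteq> V" using sq(2) qu by auto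
      ultimately have W2: "set (u # ws) \<subseteq> V - T0" by blast
      have "reach E' (V - T0) u (last q)" using path_rtc[OF ssuf _ W2] lastq by simp
      then show ?thesis using nocross[OF T0 rtranclp_trans[OF rA] hW p(2) q(3)] by blast
    next
      case True
      then have "u \<in> insert b T0" using q(2) by simp
      moreover have "u \<notin> insert a T0" using \<open>set (xs @ [u]) \<inter> insert a T0 = {}\<close> by auto
      ultimately have "u = b" by blast
      then show ?thesis using nocross[OF T0 rtranclp_trans[OF rA] hW p(2) rb(2)] rb(1) by blast
    qed
  next
    case True
    then have uSa: "u \<in> insert a T0" using p(3) by simp
    show ?thesis
    proof (cases "u = hd q")
      case False
      then have "zs \<noteq> []" using qu by auto
      then have "tl q = tl zs @ u # ws" using qu by simp
      then have "set (u # ws) \<inter> insert b T0 = {}" using q(4) by auto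
      moreover have "set (u # ws) \<subseteq> V" using sq(2) qu by auto
      ultimately have W2: "set (u # ws) \<subseteq> V - T0" by blast
      then have "u = a" using uSa by auto
      have "reach E' (V - T0) u (last q)" using path_rtc[OF ssuf _ W2] lastq by simp
      then show ?thesis using nocross[OF T0 rtranclp_trans[OF ra(1)] ra(3) ra(2) q(3)] \<open>u = a\<close> by blast
    next
      case True
      then have "u \<in> insert b T0" using q(2) by simp
      then have "u \<in> T0" using uSa ab by auto
      then show ?thesis using True \<open>u = last p\<close> by simp
    qed
  qed
qed

lemma menger_step:
  assumes g: "graph V E" and eab: "E a b"
    and E': "E' = (\<lambda>u w. E u w \<and> \<not>(u=a \<and> w=b) \<and> \<not>(u=b \<and> w=a))"
    and IH: "\<And>A B k. \<forall>T. T \<subseteq> V \<longrightarrow> sep V E' A B T \<longrightarrow> k \<le> card T \<Longrightarrow> \<exists>P. linkage V E' A B P \<and> card P = k \<and> finite P"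
    and hyp: "\<forall>T. T \<subseteq> V \<longrightarrow> sep V E A B T \<longrightarrow> k \<le> card T"
    and T0: "T0 \<subseteq> V" "sep V E' A B T0" "card T0 < k"
    and p1: "is_path V E' p1" "hd p1 \<in> A" "last p1 = a" "set p1 \<inter> T0 = {}"
    and p2: "is_path V E' p2" "hd p2 = b" "last p2 \<in> B" "set p2 \<inter> T0 = {}"
  shows "\<exists>P. linkage V E A B P \<and> card P = k \<and> finite P"
proof -
  have g': "graph V E'" using g unfolding graph_def E' by auto
  have finV: "finite V" using g by (simp add: graph_def)
  have finT0: "finite T0" using finV T0(1) finite_subset by blast
  have aV: "a \<in> V" "b \<in> V" using g eab by (auto simp: graph_def)
  have ab: "a \<noteq> b" using g eab by (auto simp: graph_def)
  have p1ne: "p1 \<noteq> []" "p2 \<noteq> []" using p1(1) p2(1) by (simp_all add: is_path_alt)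
  have aT: "a \<notin> T0" using p1(3,4) p1ne last_in_set by blast
  have bT: "b \<notin> T0" using p2(2,4) p1ne hd_in_set by blast
  define Sa where "Sa = insert a T0"
  define Sb where "Sb = insert b T0"
  have SaV: "Sa \<subseteq> V" "Sb \<subseteq> V" using T0(1) aV by (auto simp: Sa_def Sb_def)
  have sepSa: "sep V E A B Sa" "sep V E A B Sb"
    unfolding sep_def
  proof (safe)
    fix P assume P: "is_path V E P" "hd P \<in> A" "last P \<in> B" "set P \<inter> Sa = {}"
    then have "set P \<inter> T0 = {}" by (auto simp: Sa_def)
    then have "a \<in> set P" using meets_ab[OF g E' T0(2) P(1-3)] by simp
    then show False using P(4) by (auto simp: Sa_def)
  next
    fix P assume P: "is_path V E P" "hd P \<in> A" "last P \<in> B" "set P \<inter> Sb = {}"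
    then have "set P \<inter> T0 = {}" by (auto simp: Sb_def)
    then have "b \<in> set P" using meets_ab[OF g E' T0(2) P(1-3)] by simp
    then show False using P(4) by (auto simp: Sb_def)
  qed
  have cSa: "card Sa = Suc (card T0)" "card Sb = Suc (card T0)"
    using finT0 aT bT by (simp_all add: Sa_def Sb_def)
  have "k \<le> card Sa" using hyp SaV sepSa by blast
  then have cardSa: "card Sa = k" "card Sb = k" using cSa T0(3) by auto
  have hypa: "\<forall>T. T \<subseteq> V \<longrightarrow> sep V E' A Sa T \<longrightarrow> k \<le> card T"
  proof (intro allI impI)
    fix T assume "T \<subseteq> V" "sep V E' A Sa T"
    then have "sep V E A B T" using claim1[OF g E' T0(2,1) p2] by (simp add: Sa_def)
    then show "k \<le> card T" using hyp \<open>T \<subseteq> V\<close> by blast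
  qed
  have hypb: "\<forall>T. T \<subseteq> V \<longrightarrow> sep V E' Sb B T \<longrightarrow> k \<le> card T"
  proof (intro allI impI)
    fix T assume TV: "T \<subseteq> V" and sT: "sep V E' Sb B T"
    have E'': "E' = (\<lambda>u w. E u w \<and> \<not>(u=b \<and> w=a) \<and> \<not>(u=a \<and> w=b))" using E' by (auto simp: fun_eq_iff)
    have s0: "sep V E' B A T0" using sep_sym[OF g'] T0(2) by blast
    have rp: "is_path V E' (rev p1)" using path_rev[OF g'] p1(1) by simp
    have "hd (rev p1) = a" "last (rev p1) \<in> A" "set (rev p1) \<inter> T0 = {}"
      using p1 p1ne by (simp_all add: hd_rev last_rev)
    moreover have "sep V E' B (insert b T0) T" using sep_sym[OF g'] sT by (simp add: Sb_def)
    ultimately have "sep V E B A T" using claim1[OF g E'' s0 T0(1) rp] by blast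
    then have "sep V E A B T" using sep_sym[OF g] by blast
    then show "k \<le> card T" using hyp TV by blast
  qed
  obtain P0 where P0: "linkage V E' A Sa P0" "card P0 = k" "finite P0" using IH[OF hypa] by blast
  obtain PP where PP: "linkage V E' A Sa PP" "finite PP" "card PP = k" "\<forall>p\<in>PP. set (butlast p) \<inter> Sa = {}"
    using trim_linkage[OF P0(1,3)] P0(2) by auto
  obtain Q0 where Q0: "linkage V E' Sb B Q0" "card Q0 = k" "finite Q0" using IH[OF hypb] by blast
  obtain QQ where QQ: "linkage V E' Sb B QQ" "finite QQ" "card QQ = k" "\<forall>p\<in>QQ. set (tl p) \<inter> Sb = {}"
    using trim_linkage_left[OF g' Q0(1,3)] Q0(2) by auto
  have PPp: "\<And>p. p \<in> PP \<Longrightarrow> is_path V E' p \<and> hd p \<in> A \<and> last p \<in> Sa" using PP(1) unfolding linkage_def by blast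
  have PPd: "\<And>p q. p \<in> PP \<Longrightarrow> q \<in> PP \<Longrightarrow> p \<noteq> q \<Longrightarrow> set p \<inter> set q = {}" using PP(1) unfolding linkage_def by blast
  have QQp: "\<And>p. p \<in> QQ \<Longrightarrow> is_path V E' p \<and> hd p \<in> Sb \<and> last p \<in> B" using QQ(1) unfolding linkage_def by blast
  have QQd: "\<And>p q. p \<in> QQ \<Longrightarrow> q \<in> QQ \<Longrightarrow> p \<noteq> q \<Longrightarrow> set p \<inter> set q = {}" using QQ(1) unfolding linkage_def by blast
  have PPne: "\<And>p. p \<in> PP \<Longrightarrow> p \<noteq> []" using PPp by (simp add: is_path_alt)
  have QQne: "\<And>p. p \<in> QQ \<Longrightarrow> p \<noteq> []" using QQp by (simp add: is_path_alt)
  have finSa: "finite Sa" "finite Sb" using finT0 by (simp_all add: Sa_def Sb_def)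
  have injP: "inj_on last PP"
  proof (rule inj_onI)
    fix p q assume pq: "p \<in> PP" "q \<in> PP" "last p = last q"
    show "p = q"
    proof (rule ccontr)
      assume "p \<noteq> q"
      then have "set p \<inter> set q = {}" using PPd pq by blast
      moreover have "last p \<in> set p" using PPne[OF pq(1)] by simp
      moreover have "last q \<in> set q" using PPne[OF pq(2)] by simp
      ultimately show False using pq(3) by auto
    qed
  qed
  have injQ: "inj_on hd QQ"
  proof (rule inj_onI)
    fix p q assume pq: "p \<in> QQ" "q \<in> QQ" "hd p = hd q"
    show "p = q"
    proof (rule ccontr)
      assume "p \<noteq> q"
      then have "set p \<inter> set q = {}" using QQd pq by blast
      moreover have "hd p \<in> set p" using QQne[OF pq(1)] by simp
      moreover have "hd q \<in> set q" using QQne[OF pq(2)] by simp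
      ultimately show False using pq(3) by auto
    qed
  qed
  have "last ` PP = Sa"
  proof (rule card_subset_eq[OF finSa(1)])
    show "last ` PP \<subseteq> Sa" using PPp by blast
    show "card (last ` PP) = card Sa" using card_image[OF injP] PP(3) cardSa by simp
  qed
  then have "\<forall>s\<in>Sa. \<exists>p. p \<in> PP \<and> last p = s" by blast
  from bchoice[OF this] obtain Pf where Pf: "\<forall>s\<in>Sa. Pf s \<in> PP \<and> last (Pf s) = s" by blast
  have "hd ` QQ = Sb"
  proof (rule card_subset_eq[OF finSa(2)])
    show "hd ` QQ \<subseteq> Sb" using QQp by blast
    show "card (hd ` QQ) = card Sb" using card_image[OF injQ] QQ(3) cardSa by simp
  qed
  then have "\<forall>s\<in>Sb. \<exists>p. p \<in> QQ \<and> hd p = s" by blast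
  from bchoice[OF this] obtain Qf where Qf: "\<forall>s\<in>Sb. Qf s \<in> QQ \<and> hd (Qf s) = s" by blast
  have p1W: "set p1 \<subseteq> V - T0" "set p2 \<subseteq> V - T0" using p1(1,4) p2(1,4) by (auto simp: is_path_alt)
  have ra: "reach E' (V - T0) (hd p1) a"
    using path_rtc[of E' p1 "V - T0"] p1(1,3) p1W(1) p1ne by (simp add: is_path_alt)
  have rb: "reach E' (V - T0) b (last p2)"
    using path_rtc[of E' p2 "V - T0"] p2(1,2) p1W(2) p1ne by (simp add: is_path_alt)
  have h1W: "hd p1 \<in> V - T0" using p1W p1ne hd_in_set by blast
  have crossPQ: "\<And>p q u. p \<in> PP \<Longrightarrow> q \<in> QQ \<Longrightarrow> u \<in> set p \<Longrightarrow> u \<in> set q \<Longrightarrow> u \<in> T0 \<and> u = last p \<and> u = hd q"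
  proof -
    fix p q u assume pq: "p \<in> PP" "q \<in> QQ" "u \<in> set p" "u \<in> set q"
    have pp: "is_path V E' p" "hd p \<in> A" "last p \<in> insert a T0" "set (butlast p) \<inter> insert a T0 = {}"
      using PPp[OF pq(1)] PP(4) pq(1) by (auto simp: Sa_def)
    have qq: "is_path V E' q" "hd q \<in> insert b T0" "last q \<in> B" "set (tl q) \<inter> insert b T0 = {}"
      using QQp[OF pq(2)] QQ(4) pq(2) by (auto simp: Sb_def)
    show "u \<in> T0 \<and> u = last p \<and> u = hd q"
      by (rule cross[OF T0(2) pp qq ra p1(2) h1W rb p2(3) ab aT bT pq(3,4)])
  qed
  define f where "f s = (if s = a then b else s)" for s
  define Qp where "Qp s = (if s = a then Qf b else tl (Qf s))" for s
  define comb where "comb s = Pf s @ Qp s" for s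
  have fSb: "\<And>s. s \<in> Sa \<Longrightarrow> f s \<in> Sb" by (auto simp: f_def Sa_def Sb_def)
  have QpSub: "\<And>s. s \<in> Sa \<Longrightarrow> set (Qp s) \<subseteq> set (Qf (f s))"
  proof -
    fix s assume "s \<in> Sa"
    have "set (tl (Qf s)) \<subseteq> set (Qf s)" by (cases "Qf s") auto
    then show "set (Qp s) \<subseteq> set (Qf (f s))" by (simp add: Qp_def f_def)
  qed
  have Pfs: "\<And>s. s \<in> Sa \<Longrightarrow> Pf s \<in> PP \<and> last (Pf s) = s" using Pf by blast
  have Qfs: "\<And>s. s \<in> Sb \<Longrightarrow> Qf s \<in> QQ \<and> hd (Qf s) = s" using Qf by blast
  have disjPQ: "\<And>s s'. s \<in> Sa \<Longrightarrow> s' \<in> Sa \<Longrightarrow> set (Pf s) \<inter> set (Qp s') = {}"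
  proof -
    fix s s' assume ss: "s \<in> Sa" "s' \<in> Sa"
    show "set (Pf s) \<inter> set (Qp s') = {}"
    proof (rule ccontr)
      assume "set (Pf s) \<inter> set (Qp s') \<noteq> {}"
      then obtain u where u: "u \<in> set (Pf s)" "u \<in> set (Qp s')" by blast
      then have u2: "u \<in> set (Qf (f s'))" using QpSub[OF ss(2)] by blast
      have c: "u \<in> T0 \<and> u = last (Pf s) \<and> u = hd (Qf (f s'))"
        using crossPQ[OF _ _ u(1) u2] Pfs[OF ss(1)] Qfs[OF fSb[OF ss(2)]] by blast
      have "hd (Qf (f s')) = f s'" using Qfs[OF fSb[OF ss(2)]] by blast
      then have uf: "u = f s'" using c by metis
      show False
      proof (cases "s' = a")
        case True
        then have "u = b" using uf by (simp add: f_def)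
        then show False using c bT by metis
      next
        case False
        then have "u = s'" "Qp s' = tl (Qf s')" using uf by (simp_all add: f_def Qp_def)
        moreover have "Qf s' \<in> QQ" "hd (Qf s') = s'" using Qfs[of s'] fSb[OF ss(2)] False by (simp_all add: f_def)
        moreover have "distinct (Qf s')" using QQp[of "Qf s'"] calculation(3) by (simp add: is_path_alt)
        ultimately show False using u(2) QQne
          by (metis distinct.simps(2) list.collapse)
      qed
    qed
  qed
  have combOK: "\<And>s. s \<in> Sa \<Longrightarrow> is_path V E (comb s) \<and> hd (comb s) \<in> A \<and> last (comb s) \<in> B"
  proof -
    fix s assume s: "s \<in> Sa"
    have P: "Pf s \<in> PP" "last (Pf s) = s" using Pfs[OF s] by auto
    have Pp: "is_path V E' (Pf s)" "hd (Pf s) \<in> A" using PPp[OF P(1)] by auto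
    have fs: "f s \<in> Sb" using fSb[OF s] .
    have Q: "Qf (f s) \<in> QQ" "hd (Qf (f s)) = f s" using Qfs[OF fs] by auto
    have Qp': "is_path V E' (Qf (f s))" "last (Qf (f s)) \<in> B" using QQp[OF Q(1)] by auto
    have E'E: "\<And>u w. E' u w \<Longrightarrow> E u w" by (simp add: E')
    have "successively E' (Pf s)" using Pp(1) by (simp add: is_path_alt)
    then have sP: "successively E (Pf s)" by (rule successively_mono) (rule E'E)
    have "successively E' (Qf (f s))" using Qp'(1) by (simp add: is_path_alt)
    then have sQ: "successively E (Qf (f s))" by (rule successively_mono) (rule E'E)
    have Qne: "Qf (f s) \<noteq> []" using QQne Q(1) by blast
    obtain tq where Qdec: "Qf (f s) = f s # tq" using Qne Q(2) by (metis list.collapse)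
    have QpE: "Qp s = (if s = a then f s # tq else tq)"
      using Qdec by (cases "s = a") (simp_all add: Qp_def f_def)
    have sQ': "E (f s) (hd tq)" if "tq \<noteq> []" using sQ Qdec that by (simp add: successively_Cons)
    have sQt: "successively E tq" using sQ Qdec by (auto simp: successively_Cons)
    have sQp: "successively E (Qp s)" using QpE sQ Qdec sQt by (cases "s = a") simp_all
    have junc: "Qp s \<noteq> [] \<Longrightarrow> E (last (Pf s)) (hd (Qp s))"
    proof (cases "s = a")
      case True then show ?thesis using eab P(2) QpE by (simp add: f_def)
    next
      case False
      assume ne: "Qp s \<noteq> []"
      then have "tq \<noteq> []" using QpE False by simp
      then have "E (f s) (hd tq)" by (rule sQ')
      then show ?thesis using P(2) False QpE by (simp add: f_def)
    qed
    have sC: "successively E (comb s)"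
      unfolding comb_def successively_append_iff using sP sQp junc by auto
    have dP: "distinct (Pf s)" "set (Pf s) \<subseteq> V" using Pp(1) by (simp_all add: is_path_alt)
    have dQ: "distinct (Qf (f s))" "set (Qf (f s)) \<subseteq> V" using Qp'(1) by (simp_all add: is_path_alt)
    have dQp: "distinct (Qp s)" using dQ(1) Qdec QpE by (cases "s = a") simp_all
    have "distinct (comb s)" unfolding comb_def using dP(1) dQp disjPQ[OF s s] by simp
    moreover have "set (comb s) \<subseteq> V" unfolding comb_def using dP(2) dQ(2) QpSub[OF s] by auto
    moreover have "comb s \<noteq> []" unfolding comb_def using PPne P(1) by simp
    moreover have "hd (comb s) \<in> A" unfolding comb_def using PPne P(1) Pp(2) by simp
    moreover have "last (comb s) \<in> B"
    proof (cases "Qp s = []")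
      case True
      then have "s \<noteq> a" "tq = []" using QpE by (auto split: if_splits)
      then have "Qf (f s) = [s]" using Qdec by (simp add: f_def)
      then have "s \<in> B" using Qp'(2) by simp
      then show ?thesis using True P(2) by (simp add: comb_def)
    next
      case False
      have "last (Qp s) = last (Qf (f s))"
        using False Qdec QpE by (cases "s = a") auto
      then show ?thesis using False Qp'(2) by (simp add: comb_def)
    qed
    ultimately show "is_path V E (comb s) \<and> hd (comb s) \<in> A \<and> last (comb s) \<in> B"
      using sC by (simp add: is_path_alt)
  qed
  have combD: "\<And>s s'. s \<in> Sa \<Longrightarrow> s' \<in> Sa \<Longrightarrow> s \<noteq> s' \<Longrightarrow> set (comb s) \<inter> set (comb s') = {}"
  proof -
    fix s s' assume ss: "s \<in> Sa" "s' \<in> Sa" "s \<noteq> s'"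
    have "Pf s \<noteq> Pf s'" using Pfs[OF ss(1)] Pfs[OF ss(2)] ss(3) by metis
    then have d1: "set (Pf s) \<inter> set (Pf s') = {}" using PPd Pfs[OF ss(1)] Pfs[OF ss(2)] by blast
    have "f s \<noteq> f s'" using ss aT bT ab by (auto simp: f_def Sa_def)
    then have "Qf (f s) \<noteq> Qf (f s')" using Qfs[OF fSb[OF ss(1)]] Qfs[OF fSb[OF ss(2)]] by metis
    then have "set (Qf (f s)) \<inter> set (Qf (f s')) = {}"
      using QQd Qfs[OF fSb[OF ss(1)]] Qfs[OF fSb[OF ss(2)]] by blast
    then have d2: "set (Qp s) \<inter> set (Qp s') = {}" using QpSub[OF ss(1)] QpSub[OF ss(2)] by blast
    show "set (comb s) \<inter> set (comb s') = {}"
      unfolding comb_def using d1 d2 disjPQ[OF ss(1,2)] disjPQ[OF ss(2,1)] by auto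
  qed
  have combne: "\<And>s. s \<in> Sa \<Longrightarrow> comb s \<noteq> []" using combOK by (simp add: is_path_alt)
  have injC: "inj_on comb Sa"
  proof (rule inj_onI)
    fix s s' assume ss: "s \<in> Sa" "s' \<in> Sa" "comb s = comb s'"
    show "s = s'"
    proof (rule ccontr)
      assume "s \<noteq> s'"
      then have "set (comb s) \<inter> set (comb s') = {}" using combD ss by blast
      then show False using ss(3) combne[OF ss(1)] by simp
    qed
  qed
  have "linkage V E A B (comb ` Sa)"
    unfolding linkage_def
  proof (rule conjI)
    show "\<forall>p\<in>comb ` Sa. is_path V E p \<and> hd p \<in> A \<and> last p \<in> B" using combOK by blast
    show "\<forall>p\<in>comb ` Sa. \<forall>q\<in>comb ` Sa. p \<noteq> q \<longrightarrow> set p \<inter> set q = {}"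
    proof (intro ballI impI)
      fix p q assume "p \<in> comb ` Sa" "q \<in> comb ` Sa" "p \<noteq> q"
      then obtain s s' where "s \<in> Sa" "s' \<in> Sa" "p = comb s" "q = comb s'" by blast
      then show "set p \<inter> set q = {}" using combD \<open>p \<noteq> q\<close> by blast
    qed
  qed
  moreover have "card (comb ` Sa) = k" using card_image[OF injC] cardSa by simp
  ultimately show ?thesis using finSa by blast
qed

lemma find_bad_edge:
  "successively E Q \<Longrightarrow> \<not> successively E' Q \<Longrightarrow> \<exists>xs u w zs. Q = xs @ u # w # zs \<and> E u w \<and> \<not> E' u w"
proof (induction Q)
  case Nil then show ?case by simp
next
  case (Cons x Q)
  show ?case
  proof (cases Q)
    case Nil then show ?thesis using Cons.prems by simp
  next
    case (Cons y zs)
    show ?thesis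
    proof (cases "E' x y")
      case True
      then have "successively E Q" "\<not> successively E' Q" using Cons Cons.prems by auto
      then obtain as u w bs where "Q = as @ u # w # bs" "E u w" "\<not> E' u w" using Cons.IH by blast
      then show ?thesis by (intro exI[of _ "x # as"]) auto
    next
      case False
      then show ?thesis using Cons Cons.prems by (intro exI[of _ "[]"]) auto
    qed
  qed
qed

lemma linkage_mono:
  assumes "linkage V E' A B P" "\<And>u w. E' u w \<Longrightarrow> E u w"
  shows "linkage V E A B P"
proof -
  have "\<And>p. is_path V E' p \<Longrightarrow> is_path V E p"
  proof -
    fix p assume "is_path V E' p"
    moreover then have "successively E' p" by (simp add: is_path_alt)
    then have "successively E p" by (rule successively_mono) (rule assms(2))
    ultimately show "is_path V E p" by (simp add: is_path_alt)
  qed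
  then show ?thesis using assms(1) unfolding linkage_def by blast
qed

lemma menger_aux:
  "card {(u,w). E u w} = n \<Longrightarrow> graph V E \<Longrightarrow> \<forall>T. T \<subseteq> V \<longrightarrow> sep V E A B T \<longrightarrow> k \<le> card T
   \<Longrightarrow> \<exists>P. linkage V E A B P \<and> card P = k \<and> finite P"
proof (induction n arbitrary: E A B k rule: less_induct)
  case (less n)
  note g = less.prems(2) and hyp = less.prems(3)
  have finV: "finite V" using g by (simp add: graph_def)
  have edV: "{(u,w). E u w} \<subseteq> V \<times> V" using g by (auto simp: graph_def)
  have finE: "finite {(u,w). E u w}" using finite_subset[OF edV] finV by blast
  show ?case
  proof (cases "\<exists>x y. E x y")
    case False
    have "sep V E A B (A \<inter> B \<inter> V)"
      unfolding sep_def
    proof (intro allI impI)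
      fix p assume p: "is_path V E p" "hd p \<in> A" "last p \<in> B"
      then obtain x p' where px: "p = x # p'" by (cases p) (auto simp: is_path_alt)
      have "p' = []"
      proof (rule ccontr)
        assume "p' \<noteq> []"
        then have "E x (hd p')" using p(1) px by (simp add: is_path_alt successively_Cons)
        then show False using False by blast
      qed
      then show "set p \<inter> (A \<inter> B \<inter> V) \<noteq> {}" using p px by (auto simp: is_path_alt)
    qed
    then have "k \<le> card (A \<inter> B \<inter> V)" using hyp by blast
    then obtain C where C: "C \<subseteq> A \<inter> B \<inter> V" "card C = k"
      using obtain_subset_with_card_n by metis
    have finC: "finite C" using C(1) finV finite_subset by blast
    have "linkage V E A B ((\<lambda>u. [u]) ` C)"
      using C(1) unfolding linkage_def by (auto simp: is_path_alt)
    moreover have "card ((\<lambda>u. [u]) ` C) = k" using C(2) by (simp add: card_image inj_on_def)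
    ultimately show ?thesis using finC by blast
  next
    case True
    then obtain x y where exy: "E x y" by blast
    define E' where "E' = (\<lambda>u w. E u w \<and> \<not>(u=x \<and> w=y) \<and> \<not>(u=y \<and> w=x))"
    have g': "graph V E'" using g unfolding graph_def E'_def by auto
    have sub: "{(u,w). E' u w} \<subset> {(u,w). E u w}"
      using exy unfolding E'_def by auto
    have lt: "card {(u,w). E' u w} < n" using psubset_card_mono[OF finE sub] less.prems(1) by simp
    have IH: "\<And>A B k. \<forall>T. T \<subseteq> V \<longrightarrow> sep V E' A B T \<longrightarrow> k \<le> card T \<Longrightarrow> \<exists>P. linkage V E' A B P \<and> card P = k \<and> finite P"
      using less.IH[OF lt refl g'] by blast
    have E'E: "\<And>u w. E' u w \<Longrightarrow> E u w" by (simp add: E'_def)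
    show ?thesis
    proof (cases "\<forall>T. T \<subseteq> V \<longrightarrow> sep V E' A B T \<longrightarrow> k \<le> card T")
      case True
      then obtain P where "linkage V E' A B P" "card P = k" "finite P" using IH by blast
      moreover have "linkage V E A B P" by (rule linkage_mono[where E'=E', OF \<open>linkage V E' A B P\<close> E'E])
      ultimately show ?thesis by blast
    next
      case False
      then obtain T0 where T0: "T0 \<subseteq> V" "sep V E' A B T0" "card T0 < k" by (auto simp: not_le)
      have "\<not> sep V E A B T0" using hyp T0 by (auto simp: not_le)
      then obtain Q where Q: "is_path V E Q" "hd Q \<in> A" "last Q \<in> B" "set Q \<inter> T0 = {}"
        unfolding sep_def by blast
      have "\<not> is_path V E' Q" using T0(2) Q unfolding sep_def by blast
      then have "\<not> successively E' Q" using Q(1) by (simp add: is_path_alt)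
      moreover have "successively E Q" using Q(1) by (simp add: is_path_alt)
      ultimately obtain xs a b zs where Qs: "Q = xs @ a # b # zs" "E a b" "\<not> E' a b"
        using find_bad_edge by blast
      have E'ab: "E' = (\<lambda>u w. E u w \<and> \<not>(u=a \<and> w=b) \<and> \<not>(u=b \<and> w=a))"
        using Qs(2,3) unfolding E'_def by (auto simp: fun_eq_iff)
      have dQ: "distinct Q" "set Q \<subseteq> V" "successively E Q" using Q(1) by (simp_all add: is_path_alt)
      have sp1: "successively E (xs @ [a])" using dQ(3) Qs(1) successively_prefix[of E "xs @ [a]" "b # zs"] by simp
      have sp2: "successively E (b # zs)" using dQ(3) Qs(1) successively_suffix[of E "xs @ [a]" "b # zs"] by simp
      have bn: "b \<notin> set (xs @ [a])" "a \<notin> set (b # zs)" using dQ(1) Qs(1) by auto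
      have "successively E' (xs @ [a])"
      proof (rule successively_mono[OF sp1])
        fix u w assume "u \<in> set (xs @ [a])" "w \<in> set (xs @ [a])" "E u w"
        then show "E' u w" using bn(1) by (auto simp: E'ab)
      qed
      then have p1: "is_path V E' (xs @ [a])" using dQ Qs(1) by (auto simp: is_path_alt)
      have "successively E' (b # zs)"
      proof (rule successively_mono[OF sp2])
        fix u w assume "u \<in> set (b # zs)" "w \<in> set (b # zs)" "E u w"
        then show "E' u w" using bn(2) by (auto simp: E'ab)
      qed
      then have p2: "is_path V E' (b # zs)" using dQ Qs(1) by (auto simp: is_path_alt)
      have h1: "hd (xs @ [a]) \<in> A" using Q(2) Qs(1) by (cases xs) auto
      have l2: "last (b # zs) \<in> B" using Q(3) Qs(1) by simp
      have d1: "set (xs @ [a]) \<inter> T0 = {}" "set (b # zs) \<inter> T0 = {}" using Q(4) Qs(1) by auto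
      show ?thesis
        by (rule menger_step[OF g Qs(2) E'ab IH hyp T0 p1 h1 _ d1(1) p2 _ l2 d1(2)]) simp_all
    qed
  qed
qed

lemma menger:
  assumes "graph V E" "\<forall>T. T \<subseteq> V \<longrightarrow> sep V E A B T \<longrightarrow> k \<le> card T"
  shows "\<exists>P. linkage V E A B P \<and> card P = k \<and> finite P"
  using menger_aux[OF refl assms] .

lemma reach_in: "reach E W x u \<Longrightarrow> x \<in> W \<Longrightarrow> u \<in> W"
  by (induction rule: rtranclp_induct) auto

lemma reach_sym:
  assumes g: "graph V E" and r: "reach E W x u" shows "reach E W u x"
  using r
proof (induction rule: rtranclp_induct)
  case base then show ?case by simp
next
  case (step y z)
  have "(\<lambda>x y. E x y \<and> x \<in> W \<and> y \<in> W) z y" using step(2) graph_sym[OF g] by blast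
  then show ?case using step(3) by (rule converse_rtranclp_into_rtranclp)
qed

lemma exits:
  "successively E P \<Longrightarrow> P \<noteq> [] \<Longrightarrow> hd P \<in> X \<Longrightarrow> last P \<notin> X \<Longrightarrow> \<exists>z\<in>set P. z \<in> nbhd E X"
proof (induction P)
  case Nil then show ?case by simp
next
  case (Cons y P)
  then have "P \<noteq> []" by auto
  show ?case
  proof (cases "hd P \<in> X")
    case True
    then have "\<exists>z\<in>set P. z \<in> nbhd E X" using Cons \<open>P \<noteq> []\<close> by (auto simp: successively_Cons)
    then show ?thesis by auto
  next
    case False
    have "E y (hd P)" using Cons.prems \<open>P \<noteq> []\<close> by (simp add: successively_Cons)
    then have "hd P \<in> nbhd E X" using False Cons.prems(3) by (auto simp: nbhd_def)
    then show ?thesis using \<open>P \<noteq> []\<close> by auto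
  qed
qed

lemma fan_or_cut:
  assumes g: "graph V E" and S: "S \<subseteq> V" and v: "v \<in> V" "v \<notin> S"
  shows "k_linked V E k v S \<or> (\<exists>X. X \<noteq> {} \<and> X \<subseteq> V \<and> induced_connected V E X \<and> v \<in> X \<and> X \<inter> S = {} \<and> card (nbhd E X) < k)"
proof -
  define V1 where "V1 = V - {v}"
  define E1 where "E1 = (\<lambda>u w. E u w \<and> u \<noteq> v \<and> w \<noteq> v)"
  define A where "A = {u. E v u}"
  have g1: "graph V1 E1" using g unfolding graph_def V1_def E1_def by auto
  have finV: "finite V" using g by (simp add: graph_def)
  show ?thesis
  proof (cases "\<forall>T. T \<subseteq> V1 \<longrightarrow> sep V1 E1 A S T \<longrightarrow> k \<le> card T")
    case True
    obtain P where P: "linkage V1 E1 A S P" "card P = k" "finite P" using menger[OF g1 True] by blast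
    obtain xs where xs: "set xs = P" "distinct xs" using finite_distinct_list[OF P(3)] by blast
    define Ps where "Ps = map (\<lambda>p. v # p) xs"
    have lenPs: "length Ps = k" using xs P(2) distinct_card[OF xs(2)] by (simp add: Ps_def)
    have Pp: "\<And>p. p \<in> P \<Longrightarrow> is_path V1 E1 p \<and> hd p \<in> A \<and> last p \<in> S" using P(1) unfolding linkage_def by blast
    have Pd: "\<And>p q. p \<in> P \<Longrightarrow> q \<in> P \<Longrightarrow> p \<noteq> q \<Longrightarrow> set p \<inter> set q = {}" using P(1) unfolding linkage_def by blast
    have good: "\<And>p. p \<in> P \<Longrightarrow> is_path V E (v # p) \<and> hd (v # p) = v \<and> last (v # p) \<in> S"
    proof -
      fix p assume p: "p \<in> P"
      have pp: "p \<noteq> []" "distinct p" "set p \<subseteq> V1" "successively E1 p" "hd p \<in> A" "last p \<in> S"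
        using Pp[OF p] by (simp_all add: is_path_alt)
      have "successively E p" using pp(4) by (rule successively_mono) (simp add: E1_def)
      moreover have "E v (hd p)" using pp(5) by (simp add: A_def)
      ultimately have "successively E (v # p)" using pp(1) by (simp add: successively_Cons)
      moreover have "v \<notin> set p" using pp(3) by (auto simp: V1_def)
      ultimately show "is_path V E (v # p) \<and> hd (v # p) = v \<and> last (v # p) \<in> S"
        using pp v by (auto simp: is_path_alt V1_def)
    qed
    have "fan V E v S Ps"
      unfolding fan_def
    proof (intro conjI allI impI ballI)
      fix Q assume "Q \<in> set Ps"
      then obtain p where "p \<in> P" "Q = v # p" using xs(1) by (auto simp: Ps_def)
      then show "is_path V E Q" "hd Q = v" "last Q \<in> S" using good by auto
    next
      fix i j assume ij: "i < j \<and> j < length Ps"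
      then have "xs ! i \<noteq> xs ! j" using xs(2) by (simp add: Ps_def nth_eq_iff_index_eq)
      moreover have "xs ! i \<in> P" "xs ! j \<in> P" using ij xs(1) by (auto simp: Ps_def)
      ultimately have "set (xs ! i) \<inter> set (xs ! j) = {}" using Pd by blast
      moreover have "Ps ! i = v # xs ! i" "Ps ! j = v # xs ! j" using ij by (auto simp: Ps_def)
      ultimately show "set (Ps ! i) \<inter> set (Ps ! j) = {v}" by auto
    qed
    then show ?thesis using lenPs unfolding k_linked_def by blast
  next
    case False
    then obtain T where T: "T \<subseteq> V1" "sep V1 E1 A S T" "card T < k" by (auto simp: not_le)
    define W where "W = V - T"
    define X where "X = {u. reach E W v u}"
    have vW: "v \<in> W" using v T(1) by (auto simp: W_def V1_def)
    have WV: "W \<subseteq> V" by (auto simp: W_def)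
    have vX: "v \<in> X" by (simp add: X_def)
    have XW: "X \<subseteq> W" using reach_in vW by (auto simp: X_def)
    have XS: "X \<inter> S = {}"
    proof (rule ccontr)
      assume "X \<inter> S \<noteq> {}"
      then obtain s where s: "s \<in> X" "s \<in> S" by blast
      obtain p where p: "is_path V E p" "hd p = v" "last p = s" "set p \<subseteq> W"
        using rtc_path[OF _ vW WV] s(1) by (auto simp: X_def)
      have "s \<noteq> v" using s v by auto
      obtain p' where pp: "p = v # p'" using p by (cases p) (auto simp: is_path_alt)
      have ne: "p' \<noteq> []" using pp p(3) \<open>s \<noteq> v\<close> by auto
      have dp: "distinct (v # p')" "set (v # p') \<subseteq> V" "successively E (v # p')" using p(1) pp by (simp_all add: is_path_alt)
      have "successively E1 p'"
      proof (rule successively_mono)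
        show "successively E p'" using dp(3) by (auto simp: successively_Cons)
      next
        fix x y assume "x \<in> set p'" "y \<in> set p'" "E x y"
        then show "E1 x y" using dp(1) by (auto simp: E1_def)
      qed
      then have "is_path V1 E1 p'" using dp ne by (auto simp: is_path_alt V1_def)
      moreover have "hd p' \<in> A" using dp(3) ne by (simp add: successively_Cons A_def)
      moreover have "last p' \<in> S" using p(3) pp ne s(2) by simp
      ultimately have "set p' \<inter> T \<noteq> {}" using T(2) unfolding sep_def by blast
      moreover have "set p' \<subseteq> W" using p(4) pp by simp
      ultimately show False by (auto simp: W_def)
    qed
    have conn: "induced_connected V E X"
      unfolding induced_connected_def
    proof (intro ballI)
      fix x y assume xy: "x \<in> X" "y \<in> X"
      have "reach E W x v" using reach_sym[OF g] xy(1) by (simp add: X_def)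
      moreover have "reach E W v y" using xy(2) by (simp add: X_def)
      ultimately have rxy: "reach E W x y" by (rule rtranclp_trans)
      have xW: "x \<in> W" using xy XW by blast
      obtain p where p: "is_path V E p" "hd p = x" "last p = y" "set p \<subseteq> W"
        using rtc_path[OF rxy xW WV] by blast
      have "set p \<subseteq> X"
      proof
        fix z assume "z \<in> set p"
        then obtain as bs where pz: "p = as @ z # bs" using split_list by metis
        have "is_path V E (as @ [z])" using path_prefix[of V E as z bs] p(1) pz by simp
        then have "successively E (as @ [z])" by (simp add: is_path_alt)
        moreover have "set (as @ [z]) \<subseteq> W" using p(4) pz by auto
        ultimately have "reach E W (hd (as @ [z])) (last (as @ [z]))" using path_rtc by blast
        moreover have "hd (as @ [z]) = x" using p(2) pz by (cases as) auto
        ultimately have "reach E W x z" by simp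
        then show "z \<in> X" using xy(1) by (auto simp: X_def)
      qed
      then show "\<exists>p. is_path V E p \<and> set p \<subseteq> X \<and> hd p = x \<and> last p = y" using p by blast
    qed
    have nT: "nbhd E X \<subseteq> T"
    proof
      fix u assume u: "u \<in> nbhd E X"
      then obtain x where x: "x \<in> X" "E x u" "u \<notin> X" by (auto simp: nbhd_def)
      show "u \<in> T"
      proof (rule ccontr)
        assume "u \<notin> T"
        moreover have "u \<in> V" using g x(2) by (auto simp: graph_def)
        ultimately have "u \<in> W" by (simp add: W_def)
        moreover have "x \<in> W" using x(1) XW by blast
        ultimately have "reach E W v u" using x(1,2) by (auto simp: X_def intro: rtranclp.rtrancl_into_rtrancl)
        then show False using x(3) by (simp add: X_def)
      qed
    qed
    have finT: "finite T" using T(1) finV finite_subset by (auto simp: V1_def)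
    have "card (nbhd E X) < k" using card_mono[OF finT nT] T(3) by simp
    moreover have "X \<subseteq> V" using XW WV by blast
    ultimately show ?thesis using vX conn XS by blast
  qed
qed

theorem proposition1:
  fixes V :: "'a set" and E :: "'a \<Rightarrow> 'a \<Rightarrow> bool" and r :: "'a \<Rightarrow> nat" and S :: "'a set"
  assumes "graph V E" and "S \<subseteq> V"
  shows "vc_set V E r S \<longleftrightarrow>
    (\<forall>X. X \<noteq> {} \<and> X \<subseteq> V \<and> induced_connected V E X \<and> Rmax r X > card (nbhd E X)
         \<longrightarrow> S \<inter> X \<noteq> {})"
proof
  have g: "graph V E" by fact
  have finV: "finite V" using g by (simp add: graph_def)
  have nV: "\<And>X. nbhd E X \<subseteq> V" using g by (auto simp: nbhd_def graph_def)
  {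
    assume vc: "vc_set V E r S"
    show "\<forall>X. X \<noteq> {} \<and> X \<subseteq> V \<and> induced_connected V E X \<and> Rmax r X > card (nbhd E X) \<longrightarrow> S \<inter> X \<noteq> {}"
    proof (intro allI impI)
      fix X assume X: "X \<noteq> {} \<and> X \<subseteq> V \<and> induced_connected V E X \<and> Rmax r X > card (nbhd E X)"
      show "S \<inter> X \<noteq> {}"
      proof
        assume SX: "S \<inter> X = {}"
        have finX: "finite X" using X finV finite_subset by blast
        have "Max (r ` X) \<in> r ` X" using finX X by (intro Max_in) auto
        then obtain x where x: "x \<in> X" "r x = Rmax r X" by (auto simp: Rmax_def)
        have "x \<in> V - S" using x X SX by auto
        then obtain Ps where Ps: "fan V E x S Ps" "length Ps = r x"
          using vc unfolding vc_set_def k_linked_def by blast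
        have ex: "\<And>i. i < length Ps \<Longrightarrow> \<exists>z. z \<in> set (Ps ! i) \<and> z \<in> nbhd E X"
        proof -
          fix i assume i: "i < length Ps"
          then have "Ps ! i \<in> set Ps" by simp
          then have P: "is_path V E (Ps ! i)" "hd (Ps ! i) = x" "last (Ps ! i) \<in> S"
            using Ps(1) unfolding fan_def by auto
          have "last (Ps ! i) \<notin> X" using P(3) SX by blast
          moreover have "successively E (Ps ! i)" "Ps ! i \<noteq> []" using P(1) by (simp_all add: is_path_alt)
          ultimately show "\<exists>z. z \<in> set (Ps ! i) \<and> z \<in> nbhd E X" using exits P(2) x(1) by blast
        qed
        define h where "h i = (SOME z. z \<in> set (Ps ! i) \<and> z \<in> nbhd E X)" for i
        have h: "\<And>i. i < length Ps \<Longrightarrow> h i \<in> set (Ps ! i) \<and> h i \<in> nbhd E X"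
          unfolding h_def using ex by (rule someI_ex)
        have "inj_on h {..<length Ps}"
        proof (rule inj_onI)
          fix i j assume ij: "i \<in> {..<length Ps}" "j \<in> {..<length Ps}" "h i = h j"
          show "i = j"
          proof (rule ccontr)
            assume "i \<noteq> j"
            have D: "\<forall>i j. i < j \<and> j < length Ps \<longrightarrow> set (Ps ! i) \<inter> set (Ps ! j) = {x}"
              using Ps(1) unfolding fan_def by blast
            have "set (Ps ! i) \<inter> set (Ps ! j) = {x}"
            proof (cases "i < j")
              case True then show ?thesis using D ij by auto
            next
              case False then have "j < i" using \<open>i \<noteq> j\<close> by simp
              then have "set (Ps ! j) \<inter> set (Ps ! i) = {x}" using D ij by auto
              then show ?thesis by (simp add: Int_commute)
            qed
            moreover have "h i \<in> set (Ps ! i)" "h i \<in> nbhd E X" using h ij(1) by auto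
            moreover have "h i \<in> set (Ps ! j)" using h[of j] ij(2,3) by simp
            ultimately have "h i = x" by blast
            then show False using \<open>h i \<in> nbhd E X\<close> x(1) by (simp add: nbhd_def)
          qed
        qed
        moreover have "h ` {..<length Ps} \<subseteq> nbhd E X" using h by auto
        moreover have "finite (nbhd E X)" using finite_subset[OF nV finV] .
        ultimately have "card {..<length Ps} \<le> card (nbhd E X)" by (rule card_inj_on_le)
        then have "r x \<le> card (nbhd E X)" using Ps(2) by simp
        then show False using X x(2) by simp
      qed
    qed
  }
  {
    assume H: "\<forall>X. X \<noteq> {} \<and> X \<subseteq> V \<and> induced_connected V E X \<and> Rmax r X > card (nbhd E X) \<longrightarrow> S \<inter> X \<noteq> {}"
    show "vc_set V E r S"
      unfolding vc_set_def
    proof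
      fix v assume v: "v \<in> V - S"
      show "k_linked V E (r v) v S"
      proof (rule ccontr)
        assume nl: "\<not> k_linked V E (r v) v S"
        then obtain X where X: "X \<noteq> {}" "X \<subseteq> V" "induced_connected V E X" "v \<in> X" "X \<inter> S = {}" "card (nbhd E X) < r v"
          using fan_or_cut[OF g assms(2), of v "r v"] v by blast
        have finX: "finite X" using X(2) finV finite_subset by blast
        have "r v \<le> Rmax r X" unfolding Rmax_def using finX X(4) by (intro Max_ge) auto
        then have "S \<inter> X \<noteq> {}" using H X by auto
        then show False using X(5) by blast
      qed
    qed
  }
qed

end
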